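(* Let $\bm{\mu}\in X^{\mathcal{L}(\mathcal{T})}$ with $V_{s_0}(\bm{\mu})\neq\theta$, let $\ell\in\mathcal{L}(\mathcal{T})$, and let $s_0,s_1,\dots,s_k=\ell$ be the path from the root to $\ell$. Then $w^{s_0}_\ell(\bm{\mu})>0$ if and only if both: $d_{s_i}(\bm{\mu})>0$ for all $i=0,1,\dots,k$; and $s_{i+1}=c^*(s_i)$ for every $i\in\{0,\dots,k-1\}$ with $L(s_i)=$MAX in case $a_{s_0}(\bm{\mu})=$'win' (respectively with $L(s_i)=$MIN in case $a_{s_0}(\bm{\mu})=$'lose').
   Context: $\mathcal{T}$ is a finite rooted tree with node set $S$, root $s_0$, children $\mathcal{C}(s)$, leaves $\mathcal{L}(\mathcal{T})$, $\mathcal{D}(s)$ the leaves descending from $s$; internal labels $L(s)\in\{\text{MAX},\text{MIN}\}$. $X\subseteq\mathbb{R}$ mean-parameter set of a one-parameter exponential family; $d(x,y)$ KL divergence between members with means $x,y$; threshold $\theta\in X$. $V_s(\bm{\mu})=\mu_s$ at leaves, max/min of children's values at MAX/MIN nodes; $a_s(\bm{\mu})=$'win' iff $V_s(\bm{\mu})\ge\theta$. Recursive weights: $a^*=a_{s_0}(\bm{\mu})$; $P=$MAX, $Q=$MIN if $a^*=$'win', swapped if 'lose'. Leaf $s$: $w^s_s=1$, $d_s=d(\mu_s,\theta)$ if ($a^*=$'win', $\mu_s\ge\theta$) or ($a^*=$'lose', $\mu_s<\theta$), else $0$. $L(s)=P$: $d_s=\max_c d_c$, with a fixed choice $c^*(s)\in\arg\max_{c\in\mathcal{C}(s)}d_c$;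 if $d_s>0$: $w^s_\ell=w^{c^*(s)}_\ell$ for $\ell\in\mathcal{D}(c^*(s))$, $0$ for other $\ell\in\mathcal{D}(s)$. $L(s)=Q$, all $d_c>0$: $d_s=(\sum_c1/d_c)^{-1}$, $w^s_\ell=\frac{w^c_\ell/d_c}{\sum_{c'}1/d_{c'}}$ for $\ell\in\mathcal{D}(c)$. $L(s)=Q$ otherwise: $d_s=0$. Internal $s$ with $d_s=0$: $\bm{w}^s$ fixed arbitrary probability vector on $\mathcal{D}(s)$. *)

theory Defs
  imports Complex_Main
begin

datatype label = MaxL | MinL

datatype 'a gtree = Leaf 'a | Node 'a label "'a gtree list"

fun groot :: "'a gtree \<Rightarrow> 'a" where
  "groot (Leaf a) = a"
| "groot (Node a _ _) = a"

fun children :: "'a gtree \<Rightarrow> 'a gtree list" where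
  "children (Leaf a) = []"
| "children (Node _ _ cs) = cs"

fun nodes :: "'a gtree \<Rightarrow> 'a list" where
  "nodes (Leaf a) = [a]"
| "nodes (Node a _ cs) = a # concat (map nodes cs)"

fun leaves :: "'a gtree \<Rightarrow> 'a set" where
  "leaves (Leaf a) = {a}"
| "leaves (Node _ _ cs) = (\<Union>c\<in>set cs. leaves c)"

fun subtrees :: "'a gtree \<Rightarrow> 'a gtree set" where
  "subtrees (Leaf a) = {Leaf a}"
| "subtrees (Node a L cs) = insert (Node a L cs) (\<Union>c\<in>set cs. subtrees c)"

definition wf_tree :: "'a gtree \<Rightarrow> bool" where
  "wf_tree t \<longleftrightarrow> distinct (nodes t) \<and> (\<forall>a L cs. Node a L cs \<in> subtrees t \<longrightarrow> cs \<noteq> [])"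

fun tval :: "('a \<Rightarrow> real) \<Rightarrow> 'a gtree \<Rightarrow> real" where
  "tval \<mu> (Leaf a) = \<mu> a"
| "tval \<mu> (Node a MaxL cs) = Max (set (map (tval \<mu>) cs))"
| "tval \<mu> (Node a MinL cs) = Min (set (map (tval \<mu>) cs))"

definition plab :: "bool \<Rightarrow> label" where
  "plab win = (if win then MaxL else MinL)"

text \<open>Recursive complexities d_s; win = (a* = 'win').\<close>
fun dd :: "(real \<Rightarrow> real \<Rightarrow> real) \<Rightarrow> real \<Rightarrow> bool \<Rightarrow> ('a \<Rightarrow> real) \<Rightarrow> 'a gtree \<Rightarrow> real" where
  "dd d \<theta> win \<mu> (Leaf a) =
     (if (win \<and> \<theta> \<le> \<mu> a) \<or> (\<not> win \<and> \<mu> a < \<theta>) then d (\<mu> a) \<theta> else 0)"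
| "dd d \<theta> win \<mu> (Node a L cs) =
     (if L = plab win then Max (set (map (dd d \<theta> win \<mu>) cs))
      else if list_all (\<lambda>c. 0 < dd d \<theta> win \<mu> c) cs
      then inverse (\<Sum>c\<leftarrow>cs. inverse (dd d \<theta> win \<mu> c))
      else 0)"

text \<open>Recursive weights w^s_l (for leaves l below s). cstar a is the identifier of the
  chosen child c*(a); wfb a is the fallback probability vector used when d_s = 0.\<close>
fun wt :: "(real \<Rightarrow> real \<Rightarrow> real) \<Rightarrow> real \<Rightarrow> bool \<Rightarrow> ('a \<Rightarrow> real) \<Rightarrow> ('a \<Rightarrow> 'a)
           \<Rightarrow> ('a \<Rightarrow> 'a \<Rightarrow> real) \<Rightarrow> 'a gtree \<Rightarrow> 'a \<Rightarrow> real" where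
  "wt d \<theta> win \<mu> cstar wfb (Leaf a) l = (if l = a then 1 else 0)"
| "wt d \<theta> win \<mu> cstar wfb (Node a L cs) l =
     (if 0 < dd d \<theta> win \<mu> (Node a L cs) then
        (if L = plab win then
           (\<Sum>c\<leftarrow>cs. if groot c = cstar a \<and> l \<in> leaves c then wt d \<theta> win \<mu> cstar wfb c l else 0)
         else
           (\<Sum>c\<leftarrow>cs. if l \<in> leaves c then wt d \<theta> win \<mu> cstar wfb c l / dd d \<theta> win \<mu> c else 0)
           / (\<Sum>c\<leftarrow>cs. inverse (dd d \<theta> win \<mu> c)))
      else wfb a l)"

text \<open>KL divergence of a one-parameter exponential family with log-partition A on the
  natural-parameter interval I, mean map A' (= derivative of A); the mean-parameter
  set is X = A' ` I.  d(x,y) = KL(P_x || P_y).\<close>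
definition kl :: "(real \<Rightarrow> real) \<Rightarrow> (real \<Rightarrow> real) \<Rightarrow> real set \<Rightarrow> real \<Rightarrow> real \<Rightarrow> real" where
  "kl A A' I x y = (let ex = inv_into I A' x; ey = inv_into I A' y
                    in A ey - A ex - x * (ey - ex))"

definition root_path :: "'a gtree \<Rightarrow> 'a gtree list \<Rightarrow> 'a \<Rightarrow> bool" where
  "root_path t ts l \<longleftrightarrow> ts \<noteq> [] \<and> hd ts = t \<and> last ts = Leaf l \<and>
     (\<forall>i. Suc i < length ts \<longrightarrow> ts ! Suc i \<in> set (children (ts ! i)))"

end

theory Submission
  imports Defs
begin

lemma kl_pos:
  assumes I_int: "\<forall>x\<in>I. \<forall>y\<in>I. \<forall>z. x \<le> z \<and> z \<le> y \<longrightarrow> z \<in> I"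
    and A_deriv: "\<forall>\<eta>\<in>I. (A has_real_derivative A' \<eta>) (at \<eta>)"
    and mono: "strict_mono_on I A'"
    and x: "x \<in> A' ` I" and y: "y \<in> A' ` I" and xy: "x \<noteq> y"
  shows "0 < kl A A' I x y"
proof -
  define ex where "ex = inv_into I A' x"
  define ey where "ey = inv_into I A' y"
  have exI: "ex \<in> I" and eyI: "ey \<in> I" using x y by (auto simp: ex_def ey_def inv_into_into)
  have Aex: "A' ex = x" and Aey: "A' ey = y" using x y by (auto simp: ex_def ey_def f_inv_into_f)
  have ne: "ex \<noteq> ey" using Aex Aey xy by auto
  have goal: "0 < A ey - A ex - x * (ey - ex)"
  proof (cases "ex < ey")
    case True
    have "\<forall>z. ex \<le> z \<and> z \<le> ey \<longrightarrow> DERIV A z :> A' z"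
    proof (intro allI impI)
      fix z assume "ex \<le> z \<and> z \<le> ey"
      then have "z \<in> I" using I_int exI eyI by blast
      then show "DERIV A z :> A' z" using A_deriv by blast
    qed
    then obtain z where z: "ex < z" "z < ey" "A ey - A ex = (ey - ex) * A' z"
      using MVT2[OF True] by blast
    have "z \<in> I" using I_int exI eyI z less_imp_le by blast
    then have "A' ex < A' z" using mono exI z(1) by (simp add: strict_mono_onD)
    then have "(ey - ex) * x < (ey - ex) * A' z" using True Aex by simp
    then show ?thesis using z by (simp add: algebra_simps)
  next
    case False
    then have lt: "ey < ex" using ne by auto
    have "\<forall>z. ey \<le> z \<and> z \<le> ex \<longrightarrow> DERIV A z :> A' z"
    proof (intro allI impI)
      fix z assume "ey \<le> z \<and> z \<le> ex"
      then have "z \<in> I" using I_int exI eyI by blast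
      then show "DERIV A z :> A' z" using A_deriv by blast
    qed
    then obtain z where z: "ey < z" "z < ex" "A ex - A ey = (ex - ey) * A' z"
      using MVT2[OF lt] by blast
    have "z \<in> I" using I_int exI eyI z less_imp_le by blast
    then have "A' z < A' ex" using mono exI z(2) by (simp add: strict_mono_onD)
    then have "(ex - ey) * A' z < (ex - ey) * x" using lt Aex by simp
    then show ?thesis using z by (simp add: algebra_simps)
  qed
  then show ?thesis by (simp add: kl_def Let_def ex_def ey_def)
qed


lemma leaves_nodes: "leaves s \<subseteq> set (nodes s)"
  by (induction s) auto

lemma groot_nodes: "groot s \<in> set (nodes s)"
  by (cases s) auto

lemma subtrees_self: "s \<in> subtrees s"
  by (cases s) auto

lemma subtrees_trans: "u \<in> subtrees s \<Longrightarrow> v \<in> subtrees u \<Longrightarrow> v \<in> subtrees s"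
  by (induction s) auto

lemma child_disj:
  assumes "distinct (nodes (Node a L cs))" "c \<in> set cs" "c' \<in> set cs"
    "x \<in> set (nodes c)" "x \<in> set (nodes c')"
  shows "c = c'"
proof (rule ccontr)
  assume ne: "c \<noteq> c'"
  have d: "distinct (concat (map nodes cs))" using assms(1) by simp
  have nn: "\<And>u. nodes u \<noteq> []" by (case_tac u) auto
  have "distinct (map nodes cs)"
  proof -
    have "[] \<notin> set (map nodes cs)" using nn by (metis (no_types) imageE list.set_map)
    then show ?thesis using d by (simp add: distinct_concat_iff removeAll_id del: set_map)
  qed
  then have "nodes c \<noteq> nodes c'" using ne assms(2,3) by (auto simp add: distinct_map inj_on_def)
  then have "set (nodes c) \<inter> set (nodes c') = {}"
    using d assms(2,3) by (simp add: distinct_concat_iff)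
  then show False using assms(4,5) by auto
qed

lemma child_distinct:
  assumes "distinct (nodes (Node a L cs))" shows "distinct cs"
proof -
  have d: "distinct (concat (map nodes cs))" using assms(1) by simp
  have nn: "\<And>u. nodes u \<noteq> []" by (case_tac u) auto
  have "distinct (map nodes cs)"
  proof -
    have "[] \<notin> set (map nodes cs)" using nn by (metis (no_types) imageE list.set_map)
    then show ?thesis using d by (simp add: distinct_concat_iff removeAll_id del: set_map)
  qed
  then show ?thesis by (simp add: distinct_map)
qed

lemma child_distinct_nodes:
  assumes "distinct (nodes (Node a L cs))" "c \<in> set cs" shows "distinct (nodes c)"
  using assms by (simp add: distinct_concat_iff)

lemma sum_list_single:
  assumes "distinct cs" "c \<in> set cs" "\<forall>c'\<in>set cs. c' \<noteq> c \<longrightarrow> f c' = 0"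
  shows "sum_list (map f cs) = (f c :: real)"
proof -
  have "sum_list (map f cs) = sum f (set cs)" using assms(1) by (simp add: sum_list_distinct_conv_sum_set)
  also have "\<dots> = f c + sum f (set cs - {c})" using assms(2) by (simp add: sum.remove)
  also have "sum f (set cs - {c}) = 0" using assms(3) by (intro sum.neutral) auto
  finally show ?thesis by simp
qed

lemma sum_list_pos:
  "(\<forall>x\<in>set xs. 0 < (f x :: real)) \<Longrightarrow> xs \<noteq> [] \<Longrightarrow> 0 < sum_list (map f xs)"
proof (induction xs)
  case (Cons y ys) then show ?case by (cases "ys = []") (auto intro: add_pos_pos)
qed simp

lemma root_path_leaf: "root_path s ts l \<Longrightarrow> l \<in> leaves s"
proof (induction ts arbitrary: s)
  case Nil then show ?case by (simp add: root_path_def)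
next
  case (Cons x xs)
  then have sx: "s = x" by (simp add: root_path_def)
  show ?case
  proof (cases xs)
    case Nil then show ?thesis using Cons.prems sx by (simp add: root_path_def)
  next
    case (Cons y ys)
    have c: "y \<in> set (children s)" using Cons.prems sx Cons by (auto simp: root_path_def)
    have "root_path y xs l" using Cons.prems Cons unfolding root_path_def
      by auto
    then have "l \<in> leaves y" using Cons.IH by blast
    then show ?thesis using c by (cases s) auto
  qed
qed


lemma root_path_step:
  assumes "root_path s (x # y # ys) l"
  shows "x = s" "y \<in> set (children s)" "root_path y (y # ys) l"
  using assms unfolding root_path_def
  by auto

lemma dd_pos:
  fixes d :: "real \<Rightarrow> real \<Rightarrow> real"
  shows "(\<forall>x\<in>leaves s. \<mu> x \<noteq> \<theta> \<longrightarrow> 0 < d (\<mu> x) \<theta>) \<Longrightarrow>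
    (\<forall>a L cs. Node a L cs \<in> subtrees s \<longrightarrow> cs \<noteq> []) \<Longrightarrow>
    (win \<and> \<theta> < tval \<mu> s) \<or> (\<not> win \<and> tval \<mu> s < \<theta>) \<Longrightarrow> 0 < dd d \<theta> win \<mu> s"
proof (induction s)
  case (Leaf a) then show ?case by auto
next
  case (Node a L cs)
  note dp = Node.prems(1) and ne = Node.prems(2) and h0 = Node.prems(3)
  have cs: "cs \<noteq> []" using ne by auto
  have IH: "\<And>c. c \<in> set cs \<Longrightarrow> (win \<and> \<theta> < tval \<mu> c) \<or> (\<not> win \<and> tval \<mu> c < \<theta>) \<Longrightarrow> 0 < dd d \<theta> win \<mu> c"
  proof -
    fix c assume c: "c \<in> set cs" and h: "(win \<and> \<theta> < tval \<mu> c) \<or> (\<not> win \<and> tval \<mu> c < \<theta>)"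
    have dpc: "\<forall>x\<in>leaves c. \<mu> x \<noteq> \<theta> \<longrightarrow> 0 < d (\<mu> x) \<theta>" using dp c by simp
    have nec: "\<forall>a L cs. Node a L cs \<in> subtrees c \<longrightarrow> cs \<noteq> []"
    proof (intro allI impI)
      fix a' L' cs' assume "Node a' L' cs' \<in> subtrees c"
      then have "Node a' L' cs' \<in> subtrees (Node a L cs)" using c by auto
      then show "cs' \<noteq> []" using ne by blast
    qed
    show "0 < dd d \<theta> win \<mu> c" by (rule Node.IH[OF c dpc nec h])
  qed
  have fin: "finite (set (map (tval \<mu>) cs))" "set (map (tval \<mu>) cs) \<noteq> {}" using cs by auto
  show ?case
  proof (cases "L = plab win")
    case True
    have "\<exists>c\<in>set cs. (win \<and> \<theta> < tval \<mu> c) \<or> (\<not> win \<and> tval \<mu> c < \<theta>)"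
    proof (cases win)
      case True
      then have "L = MaxL" using \<open>L = plab win\<close> by (simp add: plab_def)
      then have "\<theta> < Max (set (map (tval \<mu>) cs))" using h0 True by simp
      then show ?thesis using True Max_gr_iff[OF fin] by auto
    next
      case False
      then have "L = MinL" using \<open>L = plab win\<close> by (simp add: plab_def)
      then have "Min (set (map (tval \<mu>) cs)) < \<theta>" using h0 False by simp
      then show ?thesis using False Min_less_iff[OF fin] by auto
    qed
    then obtain c where c: "c \<in> set cs" "0 < dd d \<theta> win \<mu> c" using IH by blast
    have fin2: "finite (set (map (dd d \<theta> win \<mu>) cs))" "set (map (dd d \<theta> win \<mu>) cs) \<noteq> {}" using cs by auto
    have "0 < Max (set (map (dd d \<theta> win \<mu>) cs))" using c Max_gr_iff[OF fin2] by auto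
    then show ?thesis using True by simp
  next
    case False
    have "\<forall>c\<in>set cs. (win \<and> \<theta> < tval \<mu> c) \<or> (\<not> win \<and> tval \<mu> c < \<theta>)"
    proof (cases win)
      case True
      then have "L = MinL" using False by (cases L) (auto simp: plab_def)
      then have "\<theta> < Min (set (map (tval \<mu>) cs))" using h0 True by simp
      then show ?thesis using True Min_gr_iff[OF fin] by auto
    next
      case f: False
      then have "L = MaxL" using False by (cases L) (auto simp: plab_def)
      then have "Max (set (map (tval \<mu>) cs)) < \<theta>" using h0 f by simp
      then show ?thesis using f Max_less_iff[OF fin] by auto
    qed
    then have all: "\<forall>c\<in>set cs. 0 < dd d \<theta> win \<mu> c" using IH by blast
    then have "0 < (\<Sum>c\<leftarrow>cs. inverse (dd d \<theta> win \<mu> c))" using cs by (intro sum_list_pos) auto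
    then show ?thesis using False all by (simp add: list_all_iff)
  qed
qed

definition allpos :: "(real \<Rightarrow> real \<Rightarrow> real) \<Rightarrow> real \<Rightarrow> bool \<Rightarrow> ('a \<Rightarrow> real) \<Rightarrow> 'a gtree list \<Rightarrow> bool" where
  "allpos d \<theta> win \<mu> ts = (\<forall>i<length ts. 0 < dd d \<theta> win \<mu> (ts ! i))"

definition cstok :: "bool \<Rightarrow> ('a \<Rightarrow> 'a) \<Rightarrow> 'a gtree list \<Rightarrow> bool" where
  "cstok win cstar ts = (\<forall>i a cs. Suc i < length ts \<and> ts ! i = Node a (plab win) cs \<longrightarrow>
               groot (ts ! Suc i) = cstar a)"

lemma allpos_Cons: "allpos d \<theta> win \<mu> (x # xs) = (0 < dd d \<theta> win \<mu> x \<and> allpos d \<theta> win \<mu> xs)"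
  unfolding allpos_def by (auto simp: less_Suc_eq_0_disj)

lemma cstok_single: "cstok win cstar [x]"
  unfolding cstok_def by simp

lemma cstok_Cons2:
  "cstok win cstar (x # y # ys) =
   ((\<forall>a cs. x = Node a (plab win) cs \<longrightarrow> groot y = cstar a) \<and> cstok win cstar (y # ys))"
  (is "?L = ?R")
proof
  assume L: ?L
  show ?R unfolding cstok_def
  proof (intro conjI allI impI)
    fix a cs assume "x = Node a (plab win) cs" then show "groot y = cstar a"
      using L[unfolded cstok_def, rule_format, of 0] by simp
  next
    fix i a cs assume "Suc i < length (y # ys) \<and> (y # ys) ! i = Node a (plab win) cs"
    then show "groot ((y # ys) ! Suc i) = cstar a"
      using L[unfolded cstok_def, rule_format, of "Suc i"] by simp
  qed
next
  assume R: ?R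
  show ?L unfolding cstok_def
  proof (intro allI impI)
    fix i a cs assume h: "Suc i < length (x # y # ys) \<and> (x # y # ys) ! i = Node a (plab win) cs"
    show "groot ((x # y # ys) ! Suc i) = cstar a"
    proof (cases i)
      case 0 then show ?thesis using R h by simp
    next
      case (Suc j) then show ?thesis using R[unfolded cstok_def] h by simp
    qed
  qed
qed

lemma key:
  fixes d :: "real \<Rightarrow> real \<Rightarrow> real"
  assumes "root_path s ts l"
    and "distinct (nodes s)"
    and "\<forall>a L cs. Node a L cs \<in> subtrees s \<longrightarrow> cs \<noteq> []"
    and "\<forall>a L cs. Node a L cs \<in> subtrees s \<and> L = plab win \<longrightarrow>
          (\<exists>c\<in>set cs. groot c = cstar a \<and>
             (\<forall>c'\<in>set cs. dd d \<theta> win \<mu> c' \<le> dd d \<theta> win \<mu> c))"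
    and "0 < dd d \<theta> win \<mu> s"
  shows "0 < wt d \<theta> win \<mu> cstar wfb s l \<longleftrightarrow> allpos d \<theta> win \<mu> ts \<and> cstok win cstar ts"
  using assms
proof (induction ts arbitrary: s)
  case Nil then show ?case by (simp add: root_path_def)
next
  case (Cons x xs)
  note path = Cons.prems(1) and dist = Cons.prems(2) and ne = Cons.prems(3)
    and cst = Cons.prems(4) and dpos = Cons.prems(5)
  have sx: "x = s" using path by (simp add: root_path_def)
  show ?case
  proof (cases xs)
    case Nil
    then have "s = Leaf l" using path sx by (simp add: root_path_def)
    then show ?thesis using Nil sx dpos by (simp add: allpos_Cons cstok_single allpos_def)
  next
    case (Cons c ys)
    have path': "root_path s (s # c # ys) l" using path sx Cons by simp
    note st = root_path_step[OF path']
    obtain a L cs where sN: "s = Node a L cs"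
      using st(2) by (cases s) auto
    have c: "c \<in> set cs" using st(2) sN by simp
    have pc: "root_path c xs l" using st(3) Cons by simp
    have lc: "l \<in> leaves c" using root_path_leaf[OF pc] .
    have distN: "distinct (nodes (Node a L cs))" using dist sN by simp
    have distc: "distinct (nodes c)" using child_distinct_nodes[OF distN c] .
    have distcs: "distinct cs" using child_distinct[OF distN] .
    have sub: "\<And>u. u \<in> subtrees c \<Longrightarrow> u \<in> subtrees s" using c sN by auto
    have nec: "\<forall>a L cs. Node a L cs \<in> subtrees c \<longrightarrow> cs \<noteq> []"
    proof (intro allI impI)
      fix a' L' cs' assume "Node a' L' cs' \<in> subtrees c"
      then have "Node a' L' cs' \<in> subtrees s" by (rule sub)
      then show "cs' \<noteq> []" by (rule mp[OF spec[OF spec[OF spec[OF ne, of a'], of L'], of cs']])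
    qed
    have cstc: "\<forall>a L cs. Node a L cs \<in> subtrees c \<and> L = plab win \<longrightarrow>
          (\<exists>c\<in>set cs. groot c = cstar a \<and>
             (\<forall>c'\<in>set cs. dd d \<theta> win \<mu> c' \<le> dd d \<theta> win \<mu> c))"
    proof (intro allI impI)
      fix a' L' cs' assume h: "Node a' L' cs' \<in> subtrees c \<and> L' = plab win"
      then have "Node a' L' cs' \<in> subtrees s \<and> L' = plab win" using sub by blast
      then show "\<exists>c\<in>set cs'. groot c = cstar a' \<and>
             (\<forall>c'\<in>set cs'. dd d \<theta> win \<mu> c' \<le> dd d \<theta> win \<mu> c)"
        by (rule mp[OF spec[OF spec[OF spec[OF cst, of a'], of L'], of cs']])
    qed
    have other: "\<And>c'. c' \<in> set cs \<Longrightarrow> c' \<noteq> c \<Longrightarrow> l \<notin> leaves c'"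
    proof
      fix c' assume c': "c' \<in> set cs" "c' \<noteq> c" "l \<in> leaves c'"
      have "l \<in> set (nodes c)" using lc leaves_nodes by (rule subsetD[rotated])
      moreover have "l \<in> set (nodes c')" using c'(3) leaves_nodes by (rule subsetD[rotated])
      ultimately have "c = c'" by (rule child_disj[OF distN c c'(1)])
      then show False using c'(2) by simp
    qed
    note IH = Cons.IH[OF pc distc nec cstc]
    have rhs: "(allpos d \<theta> win \<mu> (x # xs) \<and> cstok win cstar (x # xs)) =
        ((L = plab win \<longrightarrow> groot c = cstar a) \<and> allpos d \<theta> win \<mu> xs \<and> cstok win cstar xs)"
    proof -
      have e: "(\<forall>a' cs'. s = Node a' (plab win) cs' \<longrightarrow> groot c = cstar a') = (L = plab win \<longrightarrow> groot c = cstar a)"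
        unfolding sN by auto
      show ?thesis unfolding sx Cons allpos_Cons cstok_Cons2 e using dpos by blast
    qed
    have dN: "0 < dd d \<theta> win \<mu> (Node a L cs)" using dpos sN by simp
    have wtN: "wt d \<theta> win \<mu> cstar wfb s l =
      (if L = plab win then
           (\<Sum>c\<leftarrow>cs. if groot c = cstar a \<and> l \<in> leaves c then wt d \<theta> win \<mu> cstar wfb c l else 0)
         else
           (\<Sum>c\<leftarrow>cs. if l \<in> leaves c then wt d \<theta> win \<mu> cstar wfb c l / dd d \<theta> win \<mu> c else 0)
           / (\<Sum>c\<leftarrow>cs. inverse (dd d \<theta> win \<mu> c)))"
      unfolding sN wt.simps(2) if_P[OF dN] by (rule refl)
    show ?thesis
    proof (cases "L = plab win")
      case True
      have sum1: "(\<Sum>c'\<leftarrow>cs. if groot c' = cstar a \<and> l \<in> leaves c' then wt d \<theta> win \<mu> cstar wfb c' l else 0)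
          = (if groot c = cstar a \<and> l \<in> leaves c then wt d \<theta> win \<mu> cstar wfb c l else 0)"
        by (rule sum_list_single[OF distcs c]) (use other in auto)
      have wts: "wt d \<theta> win \<mu> cstar wfb s l =
          (if groot c = cstar a then wt d \<theta> win \<mu> cstar wfb c l else 0)"
        unfolding wtN sum1 using True lc by simp
      show ?thesis
      proof (cases "groot c = cstar a")
        case False
        then show ?thesis unfolding rhs wts using True by simp
      next
        case gc: True
        have "Node a L cs \<in> subtrees s" using sN subtrees_self by simp
        then obtain c0 where c0: "c0 \<in> set cs" "groot c0 = cstar a"
          "\<forall>c'\<in>set cs. dd d \<theta> win \<mu> c' \<le> dd d \<theta> win \<mu> c0"
          using spec[OF spec[OF spec[OF cst, of a], of L], of cs] True by blast
        have "groot c0 \<in> set (nodes c0)" "groot c0 \<in> set (nodes c)"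
          using groot_nodes[of c0] groot_nodes[of c] c0(2) gc by auto
        then have "c0 = c" by (intro child_disj[OF distN c0(1) c])
        then have cmax: "\<forall>c'\<in>set cs. dd d \<theta> win \<mu> c' \<le> dd d \<theta> win \<mu> c" using c0 by simp
        have ddN: "dd d \<theta> win \<mu> s = Max (set (map (dd d \<theta> win \<mu>) cs))"
          unfolding sN using True by simp
        have "Max (set (map (dd d \<theta> win \<mu>) cs)) \<in> set (map (dd d \<theta> win \<mu>) cs)"
          using c by (intro Max_in) auto
        then have "dd d \<theta> win \<mu> s \<le> dd d \<theta> win \<mu> c" unfolding ddN using cmax by auto
        then have dc: "0 < dd d \<theta> win \<mu> c" using dpos by simp
        show ?thesis unfolding rhs wts using gc IH[OF dc] by simp
      qed
    next
      case False
      have all: "\<forall>c'\<in>set cs. 0 < dd d \<theta> win \<mu> c'"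
      proof (rule ccontr)
        assume "\<not> (\<forall>c'\<in>set cs. 0 < dd d \<theta> win \<mu> c')"
        then have "\<not> list_all (\<lambda>c. 0 < dd d \<theta> win \<mu> c) cs" by (simp add: list_all_iff)
        then have "dd d \<theta> win \<mu> (Node a L cs) = 0" using False by simp
        then show False using dN by simp
      qed
      have dc: "0 < dd d \<theta> win \<mu> c" using all c by blast
      have S: "0 < (\<Sum>c\<leftarrow>cs. inverse (dd d \<theta> win \<mu> c))" using all c by (intro sum_list_pos) auto
      have sum2: "(\<Sum>c'\<leftarrow>cs. if l \<in> leaves c' then wt d \<theta> win \<mu> cstar wfb c' l / dd d \<theta> win \<mu> c' else 0)
          = (if l \<in> leaves c then wt d \<theta> win \<mu> cstar wfb c l / dd d \<theta> win \<mu> c else 0)"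
        by (rule sum_list_single[OF distcs c]) (use other in auto)
      have wts: "wt d \<theta> win \<mu> cstar wfb s l =
          (wt d \<theta> win \<mu> cstar wfb c l / dd d \<theta> win \<mu> c) / (\<Sum>c\<leftarrow>cs. inverse (dd d \<theta> win \<mu> c))"
        unfolding wtN sum2 using False lc by simp
      have "0 < wt d \<theta> win \<mu> cstar wfb s l \<longleftrightarrow> 0 < wt d \<theta> win \<mu> cstar wfb c l"
      proof -
        have q: "\<And>x y. 0 < y \<Longrightarrow> (0 < x / y) = (0 < (x::real))"
          by (simp add: zero_less_divide_iff)
        show ?thesis unfolding wts q[OF S] q[OF dc] by (rule refl)
      qed
      then show ?thesis unfolding rhs using False IH[OF dc] by simp
    qed
  qed
qed

theorem proposition9:
  fixes A A' :: "real \<Rightarrow> real" and I :: "real set" and \<theta> :: real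
    and t :: "'a gtree" and \<mu> :: "'a \<Rightarrow> real" and cstar :: "'a \<Rightarrow> 'a"
    and wfb :: "'a \<Rightarrow> 'a \<Rightarrow> real" and l :: 'a and ts :: "'a gtree list"
  defines "d \<equiv> kl A A' I"
    and "win \<equiv> \<theta> \<le> tval \<mu> t"
  assumes I_open: "open I" and I_int: "\<forall>x\<in>I. \<forall>y\<in>I. \<forall>z. x \<le> z \<and> z \<le> y \<longrightarrow> z \<in> I"
    and A_deriv: "\<forall>\<eta>\<in>I. (A has_real_derivative A' \<eta>) (at \<eta>)"
    and A'_mono: "strict_mono_on I A'"
    and theta_X: "\<theta> \<in> A' ` I"
    and wf: "wf_tree t"
    and mu_X: "\<forall>x\<in>leaves t. \<mu> x \<in> A' ` I"
    and V_ne: "tval \<mu> t \<noteq> \<theta>"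
    and cstar_argmax: "\<forall>a L cs. Node a L cs \<in> subtrees t \<and> L = plab win \<longrightarrow>
          (\<exists>c\<in>set cs. groot c = cstar a \<and>
             (\<forall>c'\<in>set cs. dd d \<theta> win \<mu> c' \<le> dd d \<theta> win \<mu> c))"
    and wfb_prob: "\<forall>a L cs. Node a L cs \<in> subtrees t \<longrightarrow>
          (\<forall>x\<in>leaves (Node a L cs). 0 \<le> wfb a x) \<and>
          (\<Sum>x\<in>leaves (Node a L cs). wfb a x) = 1"
    and path: "root_path t ts l"
  shows "0 < wt d \<theta> win \<mu> cstar wfb t l \<longleftrightarrow>
           (\<forall>i<length ts. 0 < dd d \<theta> win \<mu> (ts ! i)) \<and>
           (\<forall>i a cs. Suc i < length ts \<and> ts ! i = Node a (plab win) cs \<longrightarrow>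
               groot (ts ! Suc i) = cstar a)"
  proof -
  have dp: "\<forall>x\<in>leaves t. \<mu> x \<noteq> \<theta> \<longrightarrow> 0 < d (\<mu> x) \<theta>"
  proof (intro ballI impI)
    fix x assume "x \<in> leaves t" "\<mu> x \<noteq> \<theta>"
    then show "0 < d (\<mu> x) \<theta>" unfolding d_def
      using kl_pos[OF I_int A_deriv A'_mono, of "\<mu> x" \<theta>] mu_X theta_X by blast
  qed
  have ne: "\<forall>a L cs. Node a L cs \<in> subtrees t \<longrightarrow> cs \<noteq> []" using wf by (simp add: wf_tree_def)
  have "(win \<and> \<theta> < tval \<mu> t) \<or> (\<not> win \<and> tval \<mu> t < \<theta>)"
    using V_ne unfolding win_def by auto
  then have pos: "0 < dd d \<theta> win \<mu> t" by (rule dd_pos[where s=t and \<mu>=\<mu> and \<theta>=\<theta> and d=d and win=win, OF dp ne])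
  have dist: "distinct (nodes t)" using wf by (simp add: wf_tree_def)
  show ?thesis
    using key[OF path dist ne cstar_argmax pos] unfolding allpos_def cstok_def .
qed

end
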